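(* Let $n,d\ge1$. Let $W=(w_{i,j})$, $\widetilde W=(\tilde w_{i,j})$ be real $n\times n$ matrices and $G,\widetilde G$ real $nd\times nd$ block matrices with $d\times d$ blocks $G_{i,j},\widetilde G_{i,j}$. Suppose there exist $f_1,\dots,f_n>0$ and $\varepsilon,\eta\ge0$ with $$\sup_{i,j}\Big|\frac{\tilde w_{i,j}}{f_i}-w_{i,j}\Big|\le\varepsilon,\qquad \sup_{i,j}\|\widetilde G_{i,j}-G_{i,j}\|_F\le\eta,$$ and that there is $C>0$ with $0\le w_{i,j}\le C$ for all $i,j$, $\sup_{i,j}\|G_{i,j}\|_F\le C$ and $\sup_{i,j}\|\widetilde G_{i,j}\|_F\le C$. If $\inf_i\frac1n\sum_{j\ne i}w_{i,j}>\gamma$ and $\gamma>\varepsilon$, then $$\|L(W,G)-L(\widetilde W,\widetilde G)\|_{op}\le \frac1\gamma C(\eta+\varepsilon)+\frac{\varepsilon}{\gamma(\gamma-\varepsilon)}C^2.$$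
   Context: For an $n\times n$ matrix $W=(w_{i,j})$ and an $nd\times nd$ block matrix $G$ with $d\times d$ blocks $G_{i,j}$, define $S$ as the block matrix with blocks $S_{i,j}=w_{i,j}G_{i,j}$ and $D$ as the block-diagonal matrix with diagonal blocks $D_{i,i}=\big(\sum_{j\ne i}w_{i,j}\big)\mathrm I_d$ (assumed invertible); $L(W,G):=D^{-1}S$. $\|\cdot\|_{op}$ is the largest singular value, $\|\cdot\|_F$ the Frobenius norm. *)

theory Defs
  imports "HOL-Analysis.Analysis"
begin

text \<open>An n x n real matrix is a function nat => nat => real, only the
entries with indices below n are relevant (indices start at 0).
An nd x nd block matrix G is a function nat => nat => real on indices below n*d;
its (i,j) block (i,j < n) is the d x d matrix with entries G (i*d+a) (j*d+b), a,b < d.\<close>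

definition blk :: "nat \<Rightarrow> (nat \<Rightarrow> nat \<Rightarrow> real) \<Rightarrow> nat \<Rightarrow> nat \<Rightarrow> nat \<Rightarrow> nat \<Rightarrow> real" where
  "blk d G i j a b = G (i*d+a) (j*d+b)"

definition frob :: "nat \<Rightarrow> (nat \<Rightarrow> nat \<Rightarrow> real) \<Rightarrow> real" where
  "frob d M = sqrt (\<Sum>a<d. \<Sum>b<d. (M a b)\<^sup>2)"

definition opnorm :: "nat \<Rightarrow> (nat \<Rightarrow> nat \<Rightarrow> real) \<Rightarrow> real" where
  "opnorm N M = Sup {sqrt (\<Sum>p<N. (\<Sum>q<N. M p q * x q)\<^sup>2) | x :: nat \<Rightarrow> real.
                     (\<Sum>q<N. (x q)\<^sup>2) \<le> 1}"

definition deg :: "nat \<Rightarrow> (nat \<Rightarrow> nat \<Rightarrow> real) \<Rightarrow> nat \<Rightarrow> real" where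
  "deg n W i = (\<Sum>j\<in>{..<n} - {i}. W i j)"

text \<open>L(W,G) = D^{-1} S, where S has blocks w_{i,j} G_{i,j} and D is block diagonal
with blocks D_i I_d. Entry (p,q) of the nd x nd matrix, with p = i*d+a, q = j*d+b.\<close>
definition Lmat :: "nat \<Rightarrow> nat \<Rightarrow> (nat \<Rightarrow> nat \<Rightarrow> real) \<Rightarrow> (nat \<Rightarrow> nat \<Rightarrow> real) \<Rightarrow> nat \<Rightarrow> nat \<Rightarrow> real" where
  "Lmat n d W G p q = inverse (deg n W (p div d)) * (W (p div d) (q div d) * G p q)"

end

theory Submission
  imports Defs
begin

lemma poly_ineq:
  fixes t D C e m :: real
  assumes "0 \<le> t" "t \<le> m*e" "0 < D" "D \<le> m*C" "m \<ge> 1" "C > 0" "e \<ge> 0"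
  shows "t\<^sup>2*C*D + 2*D*t*(C*(m*e-t) - e*D) + D\<^sup>2*m*e\<^sup>2 + (C*t+e*D)\<^sup>2 \<le> (m+1)^3*e\<^sup>2*C\<^sup>2"
proof -
  have eq: "t\<^sup>2*C*D + 2*D*t*(C*(m*e-t) - e*D) + D\<^sup>2*m*e\<^sup>2 + (C*t+e*D)\<^sup>2
     = t\<^sup>2*C*(C-D) + 2*D*t*e*(C*(m+1) - D) + (m+1)*e\<^sup>2*D\<^sup>2"
    by (simp add: algebra_simps power2_eq_square)
  have mid: "2*D*t*e*(C*(m+1) - D) \<le> 2*D*(m*e)*e*(C*(m+1) - D)"
  proof -
    have "0 \<le> C*(m+1) - D" using assms by (simp add: algebra_simps)
    hence "0 \<le> 2*D*e*(C*(m+1) - D)" using assms by simp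
    from mult_left_mono[OF assms(2) this] show ?thesis by (simp add: algebra_simps)
  qed
  show ?thesis
  proof (cases "D \<ge> C")
    case True
    have f: "t\<^sup>2*C*(C-D) \<le> 0" using True assms by (simp add: mult_nonneg_nonpos)
    have "2*D*(m*e)*e*(C*(m+1) - D) + (m+1)*e\<^sup>2*D\<^sup>2 \<le> (m+1)^3*e\<^sup>2*C\<^sup>2"
    proof -
      have "2*D*(m*e)*e*(C*(m+1) - D) + (m+1)*e\<^sup>2*D\<^sup>2 \<le> (m+1)*e\<^sup>2*(2*D*(C*(m+1) - D) + D\<^sup>2)"
      proof -
        have "0 \<le> C*(m+1) - D" using assms by (simp add: algebra_simps)
        hence "0 \<le> 2*D*e*e*(C*(m+1) - D)" using assms by simp
        hence "m*(2*D*e*e*(C*(m+1) - D)) \<le> (m+1)*(2*D*e*e*(C*(m+1) - D))"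
          by (intro mult_right_mono) auto
        thus ?thesis by (simp add: algebra_simps power2_eq_square)
      qed
      also have "\<dots> \<le> (m+1)*e\<^sup>2*((m+1)*C)\<^sup>2"
      proof (intro mult_left_mono)
        have "0 \<le> ((m+1)*C - D)\<^sup>2" by simp
        thus "2*D*(C*(m+1) - D) + D\<^sup>2 \<le> ((m+1)*C)\<^sup>2" by (simp add: power2_eq_square algebra_simps)
      qed (use assms in auto)
      finally show ?thesis by (simp add: power2_eq_square power3_eq_cube algebra_simps)
    qed
    with eq mid f show ?thesis by linarith
  next
    case False
    have f: "t\<^sup>2*C*(C-D) \<le> (m*e)\<^sup>2*C*(C-D)"
      using False assms by (intro mult_right_mono power_mono) auto
    have "(m*e)\<^sup>2*C*(C-D) + 2*D*(m*e)*e*(C*(m+1) - D) + (m+1)*e\<^sup>2*D\<^sup>2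
       = e\<^sup>2*(m\<^sup>2*C*(C-D) + 2*D*m*(C*(m+1) - D) + (m+1)*D\<^sup>2)"
      by (simp add: algebra_simps power2_eq_square)
    also have "\<dots> \<le> e\<^sup>2*((m+1)^3*C\<^sup>2)"
    proof (intro mult_left_mono)
      have "m\<^sup>2*C*(C-D) + 2*D*m*(C*(m+1) - D) + (m+1)*D\<^sup>2 \<le> m\<^sup>2*C*C + 2*C*m*(C*(m+1)) + (m+1)*C\<^sup>2"
        using False assms by (intro add_mono mult_mono) (auto simp: power2_eq_square algebra_simps intro!: mult_mono)
      also have "\<dots> \<le> (m+1)^3*C\<^sup>2" using assms
        by (simp add: power2_eq_square power3_eq_cube algebra_simps) 
      finally show "m\<^sup>2*C*(C-D) + 2*D*m*(C*(m+1) - D) + (m+1)*D\<^sup>2 \<le> (m+1)^3*C\<^sup>2" .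
    qed simp
    finally show ?thesis using eq mid f by (simp add: algebra_simps)
  qed
qed

lemma row_ineq:
  fixes w \<delta> :: "nat \<Rightarrow> real" and n i :: nat and C e D \<Delta> :: real
  assumes i: "i < n" and wb: "\<forall>j<n. 0 \<le> w j \<and> w j \<le> C" and db: "\<forall>j<n. \<bar>\<delta> j\<bar> \<le> e"
    and C: "C > 0" and e: "e \<ge> 0"
    and Dd: "D = (\<Sum>j\<in>{..<n}-{i}. w j)" and Dl: "\<Delta> = (\<Sum>j\<in>{..<n}-{i}. \<delta> j)"
    and Dbig: "D > real n * e"
  shows "(\<Sum>j<n. (w j / D - (w j + \<delta> j) / (D + \<Delta>))\<^sup>2) \<le> real n ^ 3 * e\<^sup>2 * C\<^sup>2 / (D\<^sup>2 * (D - real n * e)\<^sup>2)"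
proof -
  define A where "A = {..<n}-{i}"
  define m where "m = real (n - 1)"
  have finA: "finite A" by (simp add: A_def)
  have cardA: "card A = n - 1" using i by (simp add: A_def)
  have Dpos: "D > 0"
  proof -
    have "0 \<le> real n * e" using e by simp
    thus ?thesis using Dbig by linarith
  qed
  have n1: "n \<ge> 2"
  proof (rule ccontr)
    assume "\<not> n \<ge> 2" with i have "n = 1" by auto
    with i have "A = {}" by (auto simp: A_def)
    moreover have "D = sum w A" using Dd by (simp add: A_def)
    ultimately show False using Dpos by simp
  qed
  have m1: "m \<ge> 1" using n1 by (simp add: m_def)
  have nm: "real n = m + 1" using n1 by (simp add: m_def)
  have wA: "\<And>j. j \<in> A \<Longrightarrow> 0 \<le> w j \<and> w j \<le> C" using wb by (auto simp: A_def)
  have dA: "\<And>j. j \<in> A \<Longrightarrow> \<bar>\<delta> j\<bar> \<le> e" using db by (auto simp: A_def)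
  define t where "t = \<bar>\<Delta>\<bar>"
  have t0: "0 \<le> t" by (simp add: t_def)
  have tm: "t \<le> m * e"
  proof -
    have "t \<le> (\<Sum>j\<in>A. \<bar>\<delta> j\<bar>)" unfolding t_def Dl A_def[symmetric] by (rule sum_abs)
    also have "\<dots> \<le> (\<Sum>j\<in>A. e)" by (rule sum_mono) (use dA in auto)
    also have "\<dots> = m * e" by (simp add: cardA m_def)
    finally show ?thesis .
  qed
  have DmC: "D \<le> m * C"
  proof -
    have "D \<le> (\<Sum>j\<in>A. C)" unfolding Dd A_def[symmetric] by (rule sum_mono) (use wA in auto)
    also have "\<dots> = m * C" by (simp add: cardA m_def)
    finally show ?thesis .
  qed
  define E where "E = D + \<Delta>"
  have Elow: "E \<ge> D - real n * e"
  proof -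
    have "- t \<le> \<Delta>" by (simp add: t_def)
    moreover have "m*e \<le> real n * e" using nm e by (simp add: algebra_simps)
    ultimately show ?thesis using tm unfolding E_def by linarith
  qed
  have Epos: "E > 0" using Elow Dbig by linarith
  have key: "\<And>j. w j / D - (w j + \<delta> j) / E = (w j * \<Delta> - \<delta> j * D) / (D * E)"
    using Dpos Epos unfolding E_def by (simp add: field_simps)
  have diag: "(w i * \<Delta> - \<delta> i * D)\<^sup>2 \<le> (C*t + e*D)\<^sup>2"
  proof -
    have "\<bar>w i * \<Delta> - \<delta> i * D\<bar> \<le> \<bar>w i * \<Delta>\<bar> + \<bar>\<delta> i * D\<bar>" by (rule abs_triangle_ineq4)
    also have "\<dots> \<le> C*t + e*D"
    proof (rule add_mono)
      show "\<bar>w i * \<Delta>\<bar> \<le> C*t" using wb i unfolding t_def by (simp add: abs_mult mult_right_mono)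
      show "\<bar>\<delta> i * D\<bar> \<le> e*D" using db i Dpos by (simp add: abs_mult mult_right_mono)
    qed
    finally show ?thesis by (metis abs_ge_zero power2_abs power_mono)
  qed
  have sw2: "(\<Sum>j\<in>A. (w j)\<^sup>2) \<le> C * D"
  proof -
    have "(\<Sum>j\<in>A. (w j)\<^sup>2) \<le> (\<Sum>j\<in>A. C * w j)"
      by (rule sum_mono) (use wA in \<open>auto simp: power2_eq_square intro: mult_right_mono\<close>)
    also have "\<dots> = C * D" by (simp add: Dd A_def sum_distrib_left)
    finally show ?thesis .
  qed
  have sd2: "(\<Sum>j\<in>A. (\<delta> j)\<^sup>2) \<le> m * e\<^sup>2"
  proof -
    have "(\<Sum>j\<in>A. (\<delta> j)\<^sup>2) \<le> (\<Sum>j\<in>A. e\<^sup>2)"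
    proof (rule sum_mono)
      fix j assume "j \<in> A"
      hence "\<bar>\<delta> j\<bar> \<le> \<bar>e\<bar>" using dA e by auto
      thus "(\<delta> j)\<^sup>2 \<le> e\<^sup>2" by (simp only: abs_le_square_iff)
    qed
    also have "\<dots> = m * e\<^sup>2" by (simp add: cardA m_def)
    finally show ?thesis .
  qed
  have cross: "- \<Delta> * (\<Sum>j\<in>A. w j * \<delta> j) \<le> t * (C*(m*e - t) - e*D)"
  proof (cases "\<Delta> \<ge> 0")
    case True
    have "(\<Sum>j\<in>A. C*(\<delta> j - e) + e * w j) \<le> (\<Sum>j\<in>A. w j * \<delta> j)"
    proof (rule sum_mono)
      fix j assume "j \<in> A"
      with wA[of j] dA[of j] have "0 \<le> (C - w j) * (e - \<delta> j)" by (auto simp: abs_le_iff intro!: mult_nonneg_nonneg)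
      thus "C*(\<delta> j - e) + e * w j \<le> w j * \<delta> j" by (simp add: algebra_simps)
    qed
    also have "(\<Sum>j\<in>A. C*(\<delta> j - e) + e * w j) = C*(\<Delta> - m*e) + e*D"
      by (simp add: sum.distrib sum_distrib_left sum_subtractf Dl Dd A_def[symmetric] cardA m_def algebra_simps)
    finally have "C*(\<Delta> - m*e) + e*D \<le> (\<Sum>j\<in>A. w j * \<delta> j)" .
    from mult_left_mono[OF this True] True show ?thesis unfolding t_def by (simp add: algebra_simps)
  next
    case False
    have "(\<Sum>j\<in>A. w j * \<delta> j) \<le> (\<Sum>j\<in>A. C*(\<delta> j + e) - e * w j)"
    proof (rule sum_mono)
      fix j assume "j \<in> A"
      with wA[of j] dA[of j] have "0 \<le> (C - w j) * (e + \<delta> j)" by (auto simp: abs_le_iff intro!: mult_nonneg_nonneg)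
      thus "w j * \<delta> j \<le> C*(\<delta> j + e) - e * w j" by (simp add: algebra_simps)
    qed
    also have "(\<Sum>j\<in>A. C*(\<delta> j + e) - e * w j) = C*(\<Delta> + m*e) - e*D"
      by (simp add: sum.distrib sum_distrib_left sum_subtractf Dl Dd A_def[symmetric] cardA m_def algebra_simps)
    finally have "(\<Sum>j\<in>A. w j * \<delta> j) \<le> C*(\<Delta> + m*e) - e*D" .
    from mult_left_mono[OF this, of "-\<Delta>"] False show ?thesis unfolding t_def by (simp add: algebra_simps)
  qed
  have offd: "(\<Sum>j\<in>A. (w j * \<Delta> - \<delta> j * D)\<^sup>2) \<le> t\<^sup>2*C*D + 2*D*t*(C*(m*e-t) - e*D) + D\<^sup>2*m*e\<^sup>2"
  proof -
    have "(\<Sum>j\<in>A. (w j * \<Delta> - \<delta> j * D)\<^sup>2)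
       = \<Delta>\<^sup>2 * (\<Sum>j\<in>A. (w j)\<^sup>2) + 2*D*(- \<Delta> * (\<Sum>j\<in>A. w j * \<delta> j)) + D\<^sup>2 * (\<Sum>j\<in>A. (\<delta> j)\<^sup>2)"
      by (simp add: power2_eq_square sum.distrib sum_distrib_left sum_subtractf algebra_simps sum_negf)
    also have "\<dots> \<le> t\<^sup>2 * (C*D) + 2*D*(t * (C*(m*e - t) - e*D)) + D\<^sup>2 * (m*e\<^sup>2)"
    proof (intro add_mono mult_left_mono)
      show "\<Delta>\<^sup>2 * (\<Sum>j\<in>A. (w j)\<^sup>2) \<le> t\<^sup>2 * (C * D)"
        unfolding t_def using sw2 by (simp add: mult_left_mono)
    qed (use cross sd2 Dpos in auto)
    finally show ?thesis by (simp add: algebra_simps)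
  qed
  have tot: "(\<Sum>j<n. (w j * \<Delta> - \<delta> j * D)\<^sup>2) \<le> real n ^ 3 * e\<^sup>2 * C\<^sup>2"
  proof -
    have "(\<Sum>j<n. (w j * \<Delta> - \<delta> j * D)\<^sup>2) = (w i * \<Delta> - \<delta> i * D)\<^sup>2 + (\<Sum>j\<in>A. (w j * \<Delta> - \<delta> j * D)\<^sup>2)"
      unfolding A_def using i by (simp add: sum.remove)
    also have "\<dots> \<le> (C*t + e*D)\<^sup>2 + (t\<^sup>2*C*D + 2*D*t*(C*(m*e-t) - e*D) + D\<^sup>2*m*e\<^sup>2)"
      using diag offd by (rule add_mono)
    also have "\<dots> \<le> (m+1)^3*e\<^sup>2*C\<^sup>2"
      using poly_ineq[OF t0 tm Dpos DmC m1 C e] by simp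
    finally show ?thesis by (simp add: nm)
  qed
  have "(\<Sum>j<n. (w j / D - (w j + \<delta> j) / (D + \<Delta>))\<^sup>2) = (\<Sum>j<n. (w j * \<Delta> - \<delta> j * D)\<^sup>2) / (D\<^sup>2 * E\<^sup>2)"
    unfolding E_def[symmetric] key by (simp add: power_divide sum_divide_distrib power_mult_distrib)
  also have "\<dots> \<le> real n ^ 3 * e\<^sup>2 * C\<^sup>2 / (D\<^sup>2 * E\<^sup>2)"
    using tot Dpos Epos by (simp add: divide_right_mono)
  also have "\<dots> \<le> real n ^ 3 * e\<^sup>2 * C\<^sup>2 / (D\<^sup>2 * (D - real n * e)\<^sup>2)"
  proof (rule divide_left_mono)
    have "(D - real n * e)\<^sup>2 \<le> E\<^sup>2" using Elow Dbig by (intro power_mono) auto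
    thus "D\<^sup>2 * (D - real n * e)\<^sup>2 \<le> D\<^sup>2 * E\<^sup>2" by (simp add: mult_left_mono)
    show "0 < D\<^sup>2 * E\<^sup>2 * (D\<^sup>2 * (D - real n * e)\<^sup>2)" using Dpos Epos Dbig by simp
  qed simp
  finally show ?thesis .
qed


lemma sum_blocks:
  fixes d n :: nat and h :: "nat \<Rightarrow> 'b::comm_monoid_add"
  assumes "d > 0"
  shows "(\<Sum>p<n*d. h p) = (\<Sum>i<n. \<Sum>a<d. h (i*d+a))"
proof -
  have bij: "bij_betw (\<lambda>(i,a). i*d+a) ({..<n}\<times>{..<d}) {..<n*d}"
  proof (rule bij_betwI[where g="\<lambda>p. (p div d, p mod d)"])
    show "(\<lambda>(i,a). i*d+a) \<in> {..<n}\<times>{..<d} \<rightarrow> {..<n*d}"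
    proof
      fix x assume "x \<in> {..<n}\<times>{..<d}"
      then obtain i a where x: "x = (i,a)" "i < n" "a < d" by auto
      have "i*d+a < i*d + d" using x by simp
      also have "\<dots> = (i+1)*d" by simp
      also have "\<dots> \<le> n*d" using x by (intro mult_right_mono) auto
      finally show "(\<lambda>(i,a). i*d+a) x \<in> {..<n*d}" using x by simp
    qed
    show "(\<lambda>p. (p div d, p mod d)) \<in> {..<n*d} \<rightarrow> {..<n}\<times>{..<d}"
      using assms by (auto simp: div_less_iff_less_mult)
    show "(\<lambda>p. (p div d, p mod d)) ((\<lambda>(i,a). i*d+a) x) = x" if "x \<in> {..<n}\<times>{..<d}" for x
      using that assms by auto
    show "(\<lambda>(i,a). i*d+a) (p div d, p mod d) = p" for p
      by simp
  qed
  have "(\<Sum>p<n*d. h p) = (\<Sum>x\<in>{..<n}\<times>{..<d}. h ((\<lambda>(i,a). i*d+a) x))"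
    using sum.reindex_bij_betw[OF bij, of h] by simp
  also have "\<dots> = (\<Sum>i<n. \<Sum>a<d. h (i*d+a))"
    by (simp add: sum.cartesian_product case_prod_unfold)
  finally show ?thesis .
qed

lemma sum2_blocks:
  fixes d n :: nat and X :: "nat \<Rightarrow> nat \<Rightarrow> 'b::comm_monoid_add"
  assumes "d > 0"
  shows "(\<Sum>p<n*d. \<Sum>q<n*d. X p q) = (\<Sum>i<n. \<Sum>j<n. \<Sum>a<d. \<Sum>b<d. X (i*d+a) (j*d+b))"
proof -
  have "(\<Sum>p<n*d. \<Sum>q<n*d. X p q) = (\<Sum>i<n. \<Sum>a<d. \<Sum>j<n. \<Sum>b<d. X (i*d+a) (j*d+b))"
    by (simp add: sum_blocks[OF assms])
  also have "\<dots> = (\<Sum>i<n. \<Sum>j<n. \<Sum>a<d. \<Sum>b<d. X (i*d+a) (j*d+b))"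
    by (rule sum.cong[OF refl], rule sum.swap)
  finally show ?thesis .
qed

lemma opnorm_le_frob:
  "opnorm N M \<le> sqrt (\<Sum>p<N. \<Sum>q<N. (M p q)\<^sup>2)"
  unfolding opnorm_def
proof (rule cSup_least)
  show "{sqrt (\<Sum>p<N. (\<Sum>q<N. M p q * x q)\<^sup>2) | x :: nat \<Rightarrow> real. (\<Sum>q<N. (x q)\<^sup>2) \<le> 1} \<noteq> {}"
    by (rule ccontr) (auto dest: spec[where x="\<lambda>_. 0"])
next
  fix y assume "y \<in> {sqrt (\<Sum>p<N. (\<Sum>q<N. M p q * x q)\<^sup>2) | x :: nat \<Rightarrow> real. (\<Sum>q<N. (x q)\<^sup>2) \<le> 1}"
  then obtain x where y: "y = sqrt (\<Sum>p<N. (\<Sum>q<N. M p q * x q)\<^sup>2)" and x: "(\<Sum>q<N. (x q)\<^sup>2) \<le> 1" by auto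
  have "(\<Sum>p<N. (\<Sum>q<N. M p q * x q)\<^sup>2) \<le> (\<Sum>p<N. \<Sum>q<N. (M p q)\<^sup>2)"
  proof (rule sum_mono)
    fix p
    have "(\<Sum>q<N. M p q * x q)\<^sup>2 \<le> (\<Sum>q<N. (M p q)\<^sup>2) * (\<Sum>q<N. (x q)\<^sup>2)"
      by (rule Cauchy_Schwarz_ineq_sum)
    also have "\<dots> \<le> (\<Sum>q<N. (M p q)\<^sup>2) * 1"
      by (rule mult_left_mono[OF x]) (simp add: sum_nonneg)
    finally show "(\<Sum>q<N. M p q * x q)\<^sup>2 \<le> (\<Sum>q<N. (M p q)\<^sup>2)" by simp
  qed
  thus "y \<le> sqrt (\<Sum>p<N. \<Sum>q<N. (M p q)\<^sup>2)" unfolding y by (rule real_sqrt_le_mono)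
qed

lemma frob2_triangle:
  fixes N :: nat and F H :: "nat \<Rightarrow> nat \<Rightarrow> real"
  shows
  "sqrt (\<Sum>p<N. \<Sum>q<N. (F p q + H p q)\<^sup>2) \<le> sqrt (\<Sum>p<N. \<Sum>q<N. (F p q)\<^sup>2) + sqrt (\<Sum>p<N. \<Sum>q<N. (H p q)\<^sup>2)"
proof -
  have eq: "sqrt (\<Sum>p<N. \<Sum>q<N. (X p q)\<^sup>2) = L2_set (\<lambda>(p,q). X p q) ({..<N}\<times>{..<N})" for X :: "nat \<Rightarrow> nat \<Rightarrow> real"
    unfolding L2_set_def by (simp add: sum.cartesian_product case_prod_unfold)
  show ?thesis unfolding eq
    using L2_set_triangle_ineq[of "\<lambda>(p,q). F p q" "\<lambda>(p,q). H p q" "{..<N}\<times>{..<N}"]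
    by (simp add: case_prod_unfold)
qed


theorem lemma2p2:
  fixes n d :: nat and W Wt G Gt :: "nat \<Rightarrow> nat \<Rightarrow> real" and f :: "nat \<Rightarrow> real"
    and \<epsilon> \<eta> C \<gamma> :: real
  assumes "n \<ge> 1" and "d \<ge> 1"
    and f_pos: "\<forall>i<n. f i > 0"
    and "\<epsilon> \<ge> 0" and "\<eta> \<ge> 0"
    and W_close: "\<forall>i<n. \<forall>j<n. \<bar>Wt i j / f i - W i j\<bar> \<le> \<epsilon>"
    and G_close: "\<forall>i<n. \<forall>j<n. frob d (\<lambda>a b. blk d Gt i j a b - blk d G i j a b) \<le> \<eta>"
    and "C > 0"
    and W_bd: "\<forall>i<n. \<forall>j<n. 0 \<le> W i j \<and> W i j \<le> C"
    and G_bd: "\<forall>i<n. \<forall>j<n. frob d (blk d G i j) \<le> C"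
    and Gt_bd: "\<forall>i<n. \<forall>j<n. frob d (blk d Gt i j) \<le> C"
    and deg_gt: "\<forall>i<n. (1 / real n) * deg n W i > \<gamma>"
    and "\<gamma> > \<epsilon>"
  shows "opnorm (n*d) (\<lambda>p q. Lmat n d W G p q - Lmat n d Wt Gt p q)
           \<le> (1/\<gamma>) * C * (\<eta> + \<epsilon>) + \<epsilon> / (\<gamma> * (\<gamma> - \<epsilon>)) * C\<^sup>2"
proof -
  note e0 = \<open>\<epsilon> \<ge> 0\<close> and eta0 = \<open>\<eta> \<ge> 0\<close> and C0 = \<open>C > 0\<close> and ge = \<open>\<gamma> > \<epsilon>\<close>
  have d0: "d > 0" using \<open>d \<ge> 1\<close> by simp
  have n0: "real n > 0" using \<open>n \<ge> 1\<close> by simp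
  have g0: "\<gamma> > 0" using e0 ge by linarith
  define Dg where "Dg i = deg n W i" for i
  have Dg_gt: "real n * \<gamma> < Dg i" if "i < n" for i
  proof -
    have "\<gamma> < deg n W i / real n" using deg_gt that by simp
    thus ?thesis using n0 unfolding Dg_def by (simp add: pos_less_divide_eq mult.commute)
  qed
  have Dg_pos: "Dg i > 0" if "i < n" for i
    using Dg_gt[OF that] n0 g0 by (smt (verit) mult_pos_pos)
  define u where "u i j = Wt i j / f i" for i j
  define E where "E i = deg n Wt i / f i" for i
  define c where "c i j = W i j / Dg i - u i j / E i" for i j
  define F where "F p q = W (p div d) (q div d) / Dg (p div d) * (G p q - Gt p q)" for p q
  define H where "H p q = c (p div d) (q div d) * Gt p q" for p q
  have divl: "p div d < n" if "p < n*d" for p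
    using that d0 by (simp add: div_less_iff_less_mult)
  have Meq: "Lmat n d W G p q - Lmat n d Wt Gt p q = F p q + H p q" if "p < n*d" for p q
  proof -
    define i where "i = p div d"
    define j where "j = q div d"
    have fi: "f i > 0" using f_pos divl[OF that] by (simp add: i_def)
    have "Lmat n d Wt Gt p q = u i j / E i * Gt p q"
      unfolding Lmat_def u_def E_def i_def[symmetric] j_def[symmetric]
      using fi by (cases "deg n Wt i = 0") (simp_all add: field_simps)
    moreover have "Lmat n d W G p q = W i j / Dg i * G p q"
      unfolding Lmat_def Dg_def i_def j_def by (simp add: field_simps)
    ultimately show ?thesis unfolding F_def H_def c_def i_def[symmetric] j_def[symmetric]
      by (simp add: algebra_simps)
  qed
  define SF where "SF = (\<Sum>p<n*d. \<Sum>q<n*d. (F p q)\<^sup>2)"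
  define SH where "SH = (\<Sum>p<n*d. \<Sum>q<n*d. (H p q)\<^sup>2)"
  have step1: "opnorm (n*d) (\<lambda>p q. Lmat n d W G p q - Lmat n d Wt Gt p q) \<le> sqrt SF + sqrt SH"
  proof -
    have "opnorm (n*d) (\<lambda>p q. Lmat n d W G p q - Lmat n d Wt Gt p q)
       \<le> sqrt (\<Sum>p<n*d. \<Sum>q<n*d. (Lmat n d W G p q - Lmat n d Wt Gt p q)\<^sup>2)"
      by (rule opnorm_le_frob)
    also have "(\<Sum>p<n*d. \<Sum>q<n*d. (Lmat n d W G p q - Lmat n d Wt Gt p q)\<^sup>2)
       = (\<Sum>p<n*d. \<Sum>q<n*d. (F p q + H p q)\<^sup>2)"
      by (intro sum.cong refl) (simp add: Meq)
    also have "sqrt \<dots> \<le> sqrt SF + sqrt SH" unfolding SF_def SH_def by (rule frob2_triangle)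
    finally show ?thesis .
  qed
  have divmod: "(i*d+a) div d = i" if "a < d" for i a
    using that d0 by simp
  have frob_sq: "(frob d M)\<^sup>2 = (\<Sum>a<d. \<Sum>b<d. (M a b)\<^sup>2)" for M
    unfolding frob_def by (simp add: sum_nonneg)
  have SF_bd: "SF \<le> (C*\<eta>/\<gamma>)\<^sup>2"
  proof -
    have "SF = (\<Sum>i<n. \<Sum>j<n. \<Sum>a<d. \<Sum>b<d. (F (i*d+a) (j*d+b))\<^sup>2)"
      unfolding SF_def by (rule sum2_blocks[OF d0])
    also have "\<dots> = (\<Sum>i<n. \<Sum>j<n. \<Sum>a<d. \<Sum>b<d. (W i j / Dg i)\<^sup>2 * (blk d Gt i j a b - blk d G i j a b)\<^sup>2)"
      by (intro sum.cong refl) (simp add: F_def divmod blk_def power2_commute, simp add: power_divide power_mult_distrib)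
    also have "\<dots> = (\<Sum>i<n. \<Sum>j<n. (W i j / Dg i)\<^sup>2 * (frob d (\<lambda>a b. blk d Gt i j a b - blk d G i j a b))\<^sup>2)"
      unfolding frob_sq by (simp add: sum_distrib_left)
    also have "\<dots> \<le> (\<Sum>i<n. \<Sum>j<n. (C/(real n*\<gamma>))\<^sup>2 * \<eta>\<^sup>2)"
    proof (intro sum_mono mult_mono)
      fix i j assume i: "i \<in> {..<n}" and j: "j \<in> {..<n}"
      have "W i j / Dg i \<le> C/(real n*\<gamma>)"
        using W_bd i j Dg_gt[of i] Dg_pos[of i] n0 g0 C0 by (intro frac_le) auto
      moreover have "0 \<le> W i j / Dg i" using W_bd i j Dg_pos[of i] by simp
      ultimately show "(W i j / Dg i)\<^sup>2 \<le> (C/(real n*\<gamma>))\<^sup>2" by (simp add: power_mono)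
      have "0 \<le> frob d (\<lambda>a b. blk d Gt i j a b - blk d G i j a b)" by (simp add: frob_def sum_nonneg)
      thus "(frob d (\<lambda>a b. blk d Gt i j a b - blk d G i j a b))\<^sup>2 \<le> \<eta>\<^sup>2"
        using G_close i j by (intro power_mono) auto
    qed auto
    also have "\<dots> = (C*\<eta>/\<gamma>)\<^sup>2" using n0 g0 by (simp add: field_simps power2_eq_square)
    finally show ?thesis .
  qed
  have row: "(\<Sum>j<n. (c i j)\<^sup>2) \<le> \<epsilon>\<^sup>2 * C\<^sup>2 / (real n * \<gamma>\<^sup>2 * (\<gamma> - \<epsilon>)\<^sup>2)" if i: "i < n" for i
  proof -
    define A where "A = {..<n} - {i}"
    define \<Delta> where "\<Delta> = (\<Sum>j\<in>A. u i j - W i j)"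
    have Ei: "E i = Dg i + \<Delta>"
    proof -
      have "E i = (\<Sum>j\<in>A. u i j)" unfolding E_def u_def deg_def A_def by (simp add: sum_divide_distrib)
      also have "\<dots> = Dg i + \<Delta>" unfolding Dg_def deg_def \<Delta>_def A_def by (simp add: sum_subtractf)
      finally show ?thesis .
    qed
    have ne: "Dg i > real n * \<epsilon>" using Dg_gt[OF i] ge n0 by (smt (verit) mult_strict_left_mono)
    have r: "(\<Sum>j<n. (W i j / Dg i - (W i j + (u i j - W i j)) / (Dg i + \<Delta>))\<^sup>2)
             \<le> real n ^ 3 * \<epsilon>\<^sup>2 * C\<^sup>2 / ((Dg i)\<^sup>2 * (Dg i - real n * \<epsilon>)\<^sup>2)"
      by (rule row_ineq[OF i _ _ C0 e0 _ _ ne])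
         (use W_bd W_close i in \<open>auto simp: u_def Dg_def deg_def \<Delta>_def A_def\<close>)
    have "(\<Sum>j<n. (c i j)\<^sup>2) \<le> real n ^ 3 * \<epsilon>\<^sup>2 * C\<^sup>2 / ((Dg i)\<^sup>2 * (Dg i - real n * \<epsilon>)\<^sup>2)"
      using r by (simp add: c_def Ei)
    also have "\<dots> \<le> real n ^ 3 * \<epsilon>\<^sup>2 * C\<^sup>2 / ((real n * \<gamma>)\<^sup>2 * (real n * (\<gamma> - \<epsilon>))\<^sup>2)"
    proof (rule divide_left_mono)
      have a: "(real n * \<gamma>)\<^sup>2 \<le> (Dg i)\<^sup>2" using Dg_gt[OF i] n0 g0 by (intro power_mono) auto
      have b: "(real n * (\<gamma> - \<epsilon>))\<^sup>2 \<le> (Dg i - real n * \<epsilon>)\<^sup>2"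
        using Dg_gt[OF i] n0 ge by (intro power_mono) (auto simp: algebra_simps)
      show "(real n * \<gamma>)\<^sup>2 * (real n * (\<gamma> - \<epsilon>))\<^sup>2 \<le> (Dg i)\<^sup>2 * (Dg i - real n * \<epsilon>)\<^sup>2"
        using a b by (intro mult_mono) auto
      show "0 < (Dg i)\<^sup>2 * (Dg i - real n * \<epsilon>)\<^sup>2 * ((real n * \<gamma>)\<^sup>2 * (real n * (\<gamma> - \<epsilon>))\<^sup>2)"
        using Dg_pos[OF i] ne n0 g0 ge by simp
    qed simp
    also have "\<dots> = \<epsilon>\<^sup>2 * C\<^sup>2 / (real n * \<gamma>\<^sup>2 * (\<gamma> - \<epsilon>)\<^sup>2)"
    proof -
      have eq: "(real n * \<gamma>)\<^sup>2 * (real n * (\<gamma> - \<epsilon>))\<^sup>2 = real n ^ 3 * (real n * \<gamma>\<^sup>2 * (\<gamma> - \<epsilon>)\<^sup>2)"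
        by (simp add: power2_eq_square power3_eq_cube algebra_simps)
      have "real n ^ 3 * \<epsilon>\<^sup>2 * C\<^sup>2 = real n ^ 3 * (\<epsilon>\<^sup>2 * C\<^sup>2)" by simp
      hence "real n ^ 3 * \<epsilon>\<^sup>2 * C\<^sup>2 / ((real n * \<gamma>)\<^sup>2 * (real n * (\<gamma> - \<epsilon>))\<^sup>2)
           = real n ^ 3 * (\<epsilon>\<^sup>2 * C\<^sup>2) / (real n ^ 3 * (real n * \<gamma>\<^sup>2 * (\<gamma> - \<epsilon>)\<^sup>2))"
        by (simp only: eq)
      also have "\<dots> = \<epsilon>\<^sup>2 * C\<^sup>2 / (real n * \<gamma>\<^sup>2 * (\<gamma> - \<epsilon>)\<^sup>2)"
        using n0 by (intro mult_divide_mult_cancel_left) simp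
      finally show ?thesis .
    qed
    finally show ?thesis .
  qed
  have SH_bd: "SH \<le> (\<epsilon> * C\<^sup>2 / (\<gamma> * (\<gamma> - \<epsilon>)))\<^sup>2"
  proof -
    have "SH = (\<Sum>i<n. \<Sum>j<n. \<Sum>a<d. \<Sum>b<d. (H (i*d+a) (j*d+b))\<^sup>2)"
      unfolding SH_def by (rule sum2_blocks[OF d0])
    also have "\<dots> = (\<Sum>i<n. \<Sum>j<n. \<Sum>a<d. \<Sum>b<d. (c i j)\<^sup>2 * (blk d Gt i j a b)\<^sup>2)"
      by (intro sum.cong refl) (simp add: H_def divmod blk_def power_mult_distrib)
    also have "\<dots> = (\<Sum>i<n. \<Sum>j<n. (c i j)\<^sup>2 * (frob d (blk d Gt i j))\<^sup>2)"
      unfolding frob_sq by (simp add: sum_distrib_left)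
    also have "\<dots> \<le> (\<Sum>i<n. \<Sum>j<n. (c i j)\<^sup>2 * C\<^sup>2)"
    proof (intro sum_mono mult_left_mono)
      fix i j assume i: "i \<in> {..<n}" and j: "j \<in> {..<n}"
      have "0 \<le> frob d (blk d Gt i j)" by (simp add: frob_def sum_nonneg)
      thus "(frob d (blk d Gt i j))\<^sup>2 \<le> C\<^sup>2" using Gt_bd i j by (intro power_mono) auto
    qed auto
    also have "\<dots> = C\<^sup>2 * (\<Sum>i<n. \<Sum>j<n. (c i j)\<^sup>2)" by (simp add: sum_distrib_left mult.commute)
    also have "\<dots> \<le> C\<^sup>2 * (\<Sum>i<n. \<epsilon>\<^sup>2 * C\<^sup>2 / (real n * \<gamma>\<^sup>2 * (\<gamma> - \<epsilon>)\<^sup>2))"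
      by (intro mult_left_mono sum_mono row) auto
    also have "\<dots> = C\<^sup>2 * (real n * (\<epsilon>\<^sup>2 * C\<^sup>2 / (real n * (\<gamma>\<^sup>2 * (\<gamma> - \<epsilon>)\<^sup>2))))"
      by (simp add: mult.assoc)
    also have "\<dots> = C\<^sup>2 * (\<epsilon>\<^sup>2 * C\<^sup>2 / (\<gamma>\<^sup>2 * (\<gamma> - \<epsilon>)\<^sup>2))"
      using n0 by simp
    also have "\<dots> = (\<epsilon> * C\<^sup>2 / (\<gamma> * (\<gamma> - \<epsilon>)))\<^sup>2"
      by (simp add: power_divide power_mult_distrib power2_eq_square mult_ac)
    finally show ?thesis .
  qed
  have "sqrt SF \<le> C*\<eta>/\<gamma>"
    using SF_bd C0 eta0 g0 by (metis abs_of_nonneg divide_nonneg_pos mult_nonneg_nonneg less_imp_le real_sqrt_abs real_sqrt_le_mono)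
  moreover have "sqrt SH \<le> \<epsilon> * C\<^sup>2 / (\<gamma> * (\<gamma> - \<epsilon>))"
  proof -
    have "0 \<le> \<epsilon> * C\<^sup>2 / (\<gamma> * (\<gamma> - \<epsilon>))" using e0 g0 ge by simp
    thus ?thesis using SH_bd by (metis abs_of_nonneg real_sqrt_abs real_sqrt_le_mono)
  qed
  moreover have "C*\<eta>/\<gamma> + \<epsilon> * C\<^sup>2 / (\<gamma> * (\<gamma> - \<epsilon>)) \<le> (1/\<gamma>) * C * (\<eta> + \<epsilon>) + \<epsilon> / (\<gamma> * (\<gamma> - \<epsilon>)) * C\<^sup>2"
  proof -
    have "0 \<le> C * \<epsilon> / \<gamma>" using C0 e0 g0 by simp
    moreover have "(1/\<gamma>) * C * (\<eta> + \<epsilon>) = C*\<eta>/\<gamma> + C * \<epsilon> / \<gamma>"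
      by (simp add: algebra_simps add_divide_distrib)
    moreover have "\<epsilon> * C\<^sup>2 / (\<gamma> * (\<gamma> - \<epsilon>)) = \<epsilon> / (\<gamma> * (\<gamma> - \<epsilon>)) * C\<^sup>2" by simp
    ultimately show ?thesis by linarith
  qed
  ultimately show ?thesis using step1 by linarith
qed

end
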